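(* Let $G$ be a connected graph on $n\ge2$ vertices labeled so that $\mathbb{M}_1\ge\mathbb{M}_2\ge\cdots\ge\mathbb{M}_n$, where $\mathbb{M}_i=\frac{\sum_{j=1}^n d_{ij}\mathbb{D}_j}{\mathbb{D}_i}$. Let $N=\max_{1\le i,j\le n}d_{ij}\mathbb{D}_j/\mathbb{D}_i$. Then for $1\le i\le n$, \[\rho(\mathbb{D}(G))\le \frac{\mathbb{M}_i-N+\sqrt{(\mathbb{M}_i+N)^2+4N\sum_{k=1}^{i-1}(\mathbb{M}_k-\mathbb{M}_i)}}{2}.\] Equality holds if and only if $\mathbb{M}_1=\cdots=\mathbb{M}_n$, or for some $2\le t\le i$: (i) $d_{kl}\mathbb{D}_l/\mathbb{D}_k=N$ for all $1\le k\le n$, $1\le l\le t-1$, $k\ne l$; (ii) $\mathbb{M}_t=\cdots=\mathbb{M}_n$.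
   Context: $\mathbb{D}(G)=(d_{ij})$ is the distance matrix of $G$; $\mathbb{D}_i=\sum_j d_{ij}$ is the transmission of $v_i$; $\mathbb{M}_i$ is the average transmission; $\rho$ is the spectral radius. An empty sum equals $0$. *)

theory Defs
  imports "Jordan_Normal_Form.Spectral_Radius"
begin

definition simple_graph :: "nat \<Rightarrow> (nat \<Rightarrow> nat \<Rightarrow> bool) \<Rightarrow> bool" where
  "simple_graph n E \<longleftrightarrow>
     (\<forall>i j. E i j \<longrightarrow> i < n \<and> j < n) \<and>
     (\<forall>i j. E i j \<longrightarrow> E j i) \<and> (\<forall>i. \<not> E i i)"

definition is_walk :: "nat \<Rightarrow> (nat \<Rightarrow> nat \<Rightarrow> bool) \<Rightarrow> nat list \<Rightarrow> bool" where
  "is_walk n E xs \<longleftrightarrow> xs \<noteq> [] \<and> set xs \<subseteq> {..<n} \<and>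
     (\<forall>k. Suc k < length xs \<longrightarrow> E (xs ! k) (xs ! Suc k))"

definition connected_graph :: "nat \<Rightarrow> (nat \<Rightarrow> nat \<Rightarrow> bool) \<Rightarrow> bool" where
  "connected_graph n E \<longleftrightarrow>
     (\<forall>i<n. \<forall>j<n. \<exists>xs. is_walk n E xs \<and> hd xs = i \<and> last xs = j)"

definition gdist :: "nat \<Rightarrow> (nat \<Rightarrow> nat \<Rightarrow> bool) \<Rightarrow> nat \<Rightarrow> nat \<Rightarrow> nat" where
  "gdist n E i j = (LEAST k. \<exists>xs. is_walk n E xs \<and> hd xs = i \<and> last xs = j \<and> length xs = Suc k)"

text \<open>Distance matrix D(G), as a complex matrix (so that the AFP spectral radius applies).\<close>
definition dist_matrix :: "nat \<Rightarrow> (nat \<Rightarrow> nat \<Rightarrow> bool) \<Rightarrow> complex mat" where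
  "dist_matrix n E = mat n n (\<lambda>(i, j). of_nat (gdist n E i j))"

definition transmission :: "nat \<Rightarrow> (nat \<Rightarrow> nat \<Rightarrow> bool) \<Rightarrow> nat \<Rightarrow> real" where
  "transmission n E i = (\<Sum>j<n. real (gdist n E i j))"

definition avg_transmission :: "nat \<Rightarrow> (nat \<Rightarrow> nat \<Rightarrow> bool) \<Rightarrow> nat \<Rightarrow> real" where
  "avg_transmission n E i =
     (\<Sum>j<n. real (gdist n E i j) * transmission n E j) / transmission n E i"

end

theory Submission
  imports Defs
begin


locale bnd =
  fixes n l :: nat and a :: "nat \<Rightarrow> nat \<Rightarrow> real" and N :: real and r :: "nat \<Rightarrow> real"
  assumes diag: "\<And>k. k < n \<Longrightarrow> a k k = 0"
    and nonneg: "\<And>k j. k < n \<Longrightarrow> j < n \<Longrightarrow> 0 \<le> a k j"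
    and leN: "\<And>k j. k < n \<Longrightarrow> j < n \<Longrightarrow> a k j \<le> N"
    and r_def: "\<And>k. k < n \<Longrightarrow> r k = (\<Sum>j<n. a k j)"
    and sorted: "\<And>p q. p \<le> q \<Longrightarrow> q < n \<Longrightarrow> r q \<le> r p"
    and ln: "l < n" and Npos: "N > 0"
begin

definition "S = (\<Sum>k<l. r k - r l)"
definition "phi = (r l - N + sqrt ((r l + N)\<^sup>2 + 4 * N * S)) / 2"
definition "c j = (if j < l then (r j - r l) / (phi + N) else 0)"
definition "u j = 1 + c j"
definition "C = (\<Sum>j<l. c j)"
definition "Em m = (\<Sum>j<l. if j = m then 0 else (N - a m j) * c j)"

lemma S_nonneg: "S \<ge> 0"
  unfolding S_def using sorted ln by (intro sum_nonneg) auto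

lemma rl_nonneg: "r l \<ge> 0"
  using r_def[OF ln] nonneg ln by (auto intro: sum_nonneg)

lemma phi_ge: "phi \<ge> r l"
proof -
  have "sqrt ((r l + N)\<^sup>2) \<le> sqrt ((r l + N)\<^sup>2 + 4 * N * S)"
    using S_nonneg Npos by (intro real_sqrt_le_mono) auto
  moreover have "sqrt ((r l + N)\<^sup>2) = r l + N" using rl_nonneg Npos by simp
  ultimately show ?thesis unfolding phi_def by simp
qed

lemma phiN_pos: "phi + N > 0" using phi_ge rl_nonneg Npos by linarith

lemma phi_eq: "(phi - r l) * (phi + N) = N * S"
proof -
  define s where "s = sqrt ((r l + N)\<^sup>2 + 4 * N * S)"
  have s2: "s\<^sup>2 = (r l + N)\<^sup>2 + 4 * N * S" unfolding s_def
    using S_nonneg Npos by (intro real_sqrt_pow2) (auto intro!: add_nonneg_nonneg)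
  have "phi = (r l - N + s) / 2" unfolding phi_def s_def by simp
  then have "s = 2 * phi - r l + N" by simp
  then have "(2 * phi - r l + N)\<^sup>2 = (r l + N)\<^sup>2 + 4 * N * S" using s2 by simp
  then show ?thesis by (simp add: power2_eq_square algebra_simps)
qed

lemma C_eq: "C = S / (phi + N)"
  unfolding C_def S_def c_def using phiN_pos by (simp add: sum_divide_distrib)

lemma key: "r l + N * C = phi"
proof -
  have "N * C = N * S / (phi + N)" using C_eq by simp
  also have "\<dots> = phi - r l" using phi_eq phiN_pos by (simp add: field_simps)
  finally show ?thesis by simp
qed

lemma c_nonneg: "c j \<ge> 0"
  unfolding c_def using sorted ln phiN_pos by auto

lemma c_rel: "j < l \<Longrightarrow> r j = r l + (phi + N) * c j"
  unfolding c_def using phiN_pos by simp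

lemma Em_nonneg: "m < n \<Longrightarrow> Em m \<ge> 0"
  unfolding Em_def using leN ln c_nonneg by (intro sum_nonneg) auto

lemma Au_formula:
  assumes m: "m < n"
  shows "(\<Sum>j<n. a m j * u j) = r m + N * C - (if m < l then N * c m else 0) - Em m"
proof -
  have "(\<Sum>j<n. a m j * u j) = (\<Sum>j<n. a m j) + (\<Sum>j<n. a m j * c j)"
    unfolding u_def by (simp add: algebra_simps sum.distrib)
  also have "(\<Sum>j<n. a m j * c j) = (\<Sum>j<l. a m j * c j)"
  proof -
    show ?thesis using ln by (intro sum.mono_neutral_right) (auto simp: c_def)
  qed
  also have "(\<Sum>j<l. a m j * c j) = N * C - (if m < l then N * c m else 0) - Em m"
  proof -
    have "(\<Sum>j<l. N * c j) = (\<Sum>j<l. a m j * c j) + (\<Sum>j<l. if j = m then N * c j else 0) + Em m"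
    proof -
      have "(\<Sum>j<l. N * c j) = (\<Sum>j<l. a m j * c j + (if j = m then N * c j else 0)
            + (if j = m then 0 else (N - a m j) * c j))"
        by (rule sum.cong) (auto simp: diag[OF m] algebra_simps)
      then show ?thesis unfolding Em_def by (simp only: sum.distrib)
    qed
    moreover have "(\<Sum>j<l. if j = m then N * c j else 0) = (if m < l then N * c m else 0)"
      by (simp add: sum.delta)
    ultimately show ?thesis unfolding C_def by (simp add: sum_distrib_left)
  qed
  finally show ?thesis using r_def[OF m] by simp
qed

lemma Au_lt: assumes m: "m < n" and ml: "m < l"
  shows "(\<Sum>j<n. a m j * u j) = phi * u m - Em m"
proof -
  have "(\<Sum>j<n. a m j * u j) = r m + N * C - N * c m - Em m" using Au_formula[OF m] ml by simp
  moreover have "r m = r l + phi * c m + N * c m" using c_rel[OF ml] by (simp add: distrib_right)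
  moreover have "phi * u m = phi + phi * c m" unfolding u_def by (simp add: distrib_left)
  ultimately show ?thesis using key by linarith
qed

lemma Au_ge: assumes m: "m < n" and ml: "\<not> m < l"
  shows "(\<Sum>j<n. a m j * u j) = phi * u m - (r l - r m) - Em m"
proof -
  have "(\<Sum>j<n. a m j * u j) = r m + N * C - Em m" using Au_formula[OF m] ml by simp
  moreover have "u m = 1" unfolding u_def c_def using ml by simp
  ultimately show ?thesis using key by simp
qed

lemma rge: "m < n \<Longrightarrow> \<not> m < l \<Longrightarrow> r m \<le> r l" using sorted by auto

lemma Au_le: assumes m: "m < n" shows "(\<Sum>j<n. a m j * u j) \<le> phi * u m"
  using Au_lt[OF m] Au_ge[OF m] rge[OF m] Em_nonneg[OF m] by (cases "m < l") auto

lemma Au_eq_iff: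
  "(\<forall>m<n. (\<Sum>j<n. a m j * u j) = phi * u m) \<longleftrightarrow>
   (\<forall>m<n. Em m = 0) \<and> (\<forall>m. l \<le> m \<and> m < n \<longrightarrow> r m = r l)"
proof
  assume H: "\<forall>m<n. (\<Sum>j<n. a m j * u j) = phi * u m"
  have A1: "Em m = 0" and A2: "l \<le> m \<Longrightarrow> r m = r l" if m: "m < n" for m
  proof -
    have h: "(\<Sum>j<n. a m j * u j) = phi * u m" using H m by blast
    have "Em m = 0 \<and> (l \<le> m \<longrightarrow> r m = r l)"
    proof (cases "m < l")
      case True
      then have "Em m = 0" using h Au_lt[OF m True] by linarith
      then show ?thesis using True by simp
    next
      case False
      have "Em m = 0" "r m = r l"
        using h Au_ge[OF m False] rge[OF m False] Em_nonneg[OF m] by linarith+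
      then show ?thesis by simp
    qed
    then show "Em m = 0" "l \<le> m \<Longrightarrow> r m = r l" by blast+
  qed
  then show "(\<forall>m<n. Em m = 0) \<and> (\<forall>m. l \<le> m \<and> m < n \<longrightarrow> r m = r l)" by blast
next
  assume H: "(\<forall>m<n. Em m = 0) \<and> (\<forall>m. l \<le> m \<and> m < n \<longrightarrow> r m = r l)"
  show "\<forall>m<n. (\<Sum>j<n. a m j * u j) = phi * u m"
  proof (intro allI impI)
    fix m assume m: "m < n"
    have e: "Em m = 0" using H m by blast
    show "(\<Sum>j<n. a m j * u j) = phi * u m"
    proof (cases "m < l")
      case True then show ?thesis using e Au_lt[OF m True] by linarith
    next
      case False
      then have "r m = r l" using H m by (meson not_le)
      then show ?thesis using e Au_ge[OF m False] by linarith
    qed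
  qed
qed


lemma u_pos: "u j > 0" unfolding u_def using c_nonneg[of j] by linarith

lemma Em_zero_iff: "m < n \<Longrightarrow> Em m = 0 \<longleftrightarrow> (\<forall>j<l. j \<noteq> m \<longrightarrow> (N - a m j) * c j = 0)"
  unfolding Em_def using leN ln c_nonneg
  by (subst sum_nonneg_eq_0_iff) auto

lemma c_pos: "j < l \<Longrightarrow> r j \<noteq> r l \<Longrightarrow> c j > 0"
  using sorted[of j l] ln phiN_pos unfolding c_def by auto

lemma c_zero: "r j = r l \<Longrightarrow> c j = 0" unfolding c_def by simp

lemma cond_iff:
  "((\<forall>m<n. Em m = 0) \<and> (\<forall>m. l \<le> m \<and> m < n \<longrightarrow> r m = r l)) \<longleftrightarrow>
   ((\<forall>k<n. r k = r 0) \<or>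
    (\<exists>t. 1 \<le> t \<and> t \<le> l \<and> (\<forall>k<n. \<forall>j<t. k \<noteq> j \<longrightarrow> a k j = N) \<and>
        (\<forall>k. t \<le> k \<and> k < n \<longrightarrow> r k = r t)))"
proof
  assume H: "(\<forall>m<n. Em m = 0) \<and> (\<forall>m. l \<le> m \<and> m < n \<longrightarrow> r m = r l)"
  define t where "t = (LEAST t. r t = r l)"
  have tl: "t \<le> l" unfolding t_def by (rule Least_le) simp
  have rt: "r t = r l" unfolding t_def by (rule LeastI[of _ l]) simp
  have rj: "j < t \<Longrightarrow> r j \<noteq> r l" for j unfolding t_def by (rule not_less_Least)
  have rk: "r k = r l" if k: "t \<le> k" "k < n" for k
  proof (cases "k \<le> l")
    case True
    have "r l \<le> r k" using sorted[OF True] ln by simp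
    moreover have "r k \<le> r t" using sorted[OF k(1)] k by simp
    ultimately show ?thesis using rt by simp
  next
    case False then have "l \<le> k" by simp
    have H2: "\<forall>m. l \<le> m \<and> m < n \<longrightarrow> r m = r l" using H by (rule conjunct2)
    show ?thesis using H2 k \<open>l \<le> k\<close> by blast
  qed
  show "(\<forall>k<n. r k = r 0) \<or>
    (\<exists>t. 1 \<le> t \<and> t \<le> l \<and> (\<forall>k<n. \<forall>j<t. k \<noteq> j \<longrightarrow> a k j = N) \<and>
        (\<forall>k. t \<le> k \<and> k < n \<longrightarrow> r k = r t))"
  proof (cases "t = 0")
    case True
    then have "\<forall>k<n. r k = r 0" using rk rt by (metis le0)
    then show ?thesis by blast
  next
    case False
    have "\<forall>k<n. \<forall>j<t. k \<noteq> j \<longrightarrow> a k j = N"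
    proof (intro allI impI)
      fix k j assume k: "k < n" and j: "j < t" and kj: "k \<noteq> j"
      have jl: "j < l" using j tl by simp
      have "c j > 0" using c_pos[OF jl rj[OF j]] .
      moreover have "(N - a k j) * c j = 0" using H k Em_zero_iff[OF k] jl kj by blast
      ultimately show "a k j = N" by simp
    qed
    moreover have "\<forall>k. t \<le> k \<and> k < n \<longrightarrow> r k = r t" using rk rt by metis
    moreover have "1 \<le> t" using False by simp
    ultimately show ?thesis using tl by blast
  qed
next
  assume H: "(\<forall>k<n. r k = r 0) \<or>
    (\<exists>t. 1 \<le> t \<and> t \<le> l \<and> (\<forall>k<n. \<forall>j<t. k \<noteq> j \<longrightarrow> a k j = N) \<and>
        (\<forall>k. t \<le> k \<and> k < n \<longrightarrow> r k = r t))"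
  then show "(\<forall>m<n. Em m = 0) \<and> (\<forall>m. l \<le> m \<and> m < n \<longrightarrow> r m = r l)"
  proof
    assume A: "\<forall>k<n. r k = r 0"
    have rl: "r k = r l" if "k < n" for k proof -
      have "r k = r 0" "r l = r 0" using A that ln by blast+
      then show ?thesis by simp
    qed
    have "\<forall>m<n. Em m = 0"
    proof (intro allI impI)
      fix m assume m: "m < n"
      show "Em m = 0" unfolding Em_zero_iff[OF m]
      proof (intro allI impI)
        fix j assume "j < l" "j \<noteq> m"
        then have "c j = 0" using c_zero rl ln by (meson order.strict_trans)
        then show "(N - a m j) * c j = 0" by simp
      qed
    qed
    then show ?thesis using rl by blast
  next
    assume "\<exists>t. 1 \<le> t \<and> t \<le> l \<and> (\<forall>k<n. \<forall>j<t. k \<noteq> j \<longrightarrow> a k j = N) \<and>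
        (\<forall>k. t \<le> k \<and> k < n \<longrightarrow> r k = r t)"
    then obtain t where t: "t \<le> l" and aN: "\<forall>k<n. \<forall>j<t. k \<noteq> j \<longrightarrow> a k j = N"
      and rt: "\<forall>k. t \<le> k \<and> k < n \<longrightarrow> r k = r t" by blast
    have rtl: "r l = r t" using rt t ln by blast
    have "\<forall>m<n. Em m = 0"
    proof (intro allI impI)
      fix m assume m: "m < n"
      show "Em m = 0" unfolding Em_zero_iff[OF m]
      proof (intro allI impI)
        fix j assume j: "j < l" "j \<noteq> m"
        show "(N - a m j) * c j = 0"
        proof (cases "j < t")
          case True then show ?thesis using aN m j by simp
        next
          case False
          then have "t \<le> j \<and> j < n" using j ln by simp
          then have "r j = r l" using rt rtl by metis
          then show ?thesis using c_zero by simp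
        qed
      qed
    qed
    moreover have "\<forall>m. l \<le> m \<and> m < n \<longrightarrow> r m = r l" using rt rtl t by (metis order.trans)
    ultimately show ?thesis by blast
  qed
qed

lemma sub_eig:
  fixes y :: "nat \<Rightarrow> real" and rho :: real
  assumes ynn: "\<And>j. j < n \<Longrightarrow> y j \<ge> 0" and k0: "k0 < n" "y k0 > 0"
    and sub: "\<And>k. k < n \<Longrightarrow> rho * y k \<le> (\<Sum>j<n. a k j * y j)"
  shows "rho \<le> phi"
    and "rho = phi \<Longrightarrow> (\<And>k j. k < n \<Longrightarrow> j < n \<Longrightarrow> k \<noteq> j \<Longrightarrow> a k j > 0)
          \<Longrightarrow> \<forall>m<n. (\<Sum>j<n. a m j * u j) = phi * u m"
proof -
  define f where "f j = y j / u j" for j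
  have ne: "f ` {..<n} \<noteq> {}" using k0 by auto
  have "Max (f ` {..<n}) \<in> f ` {..<n}" using ne by (intro Max_in) auto
  then obtain k where k: "k < n" and fk: "f k = Max (f ` {..<n})" by auto
  have fmax: "f j \<le> f k" if "j < n" for j using fk that by simp
  define s where "s = f k"
  have spos: "s > 0" using fmax[OF k0(1)] k0 u_pos[of k0] unfolding s_def f_def
    by (smt (verit) divide_pos_pos)
  have yk: "y k = s * u k" unfolding s_def f_def using u_pos[of k] by simp
  have yle: "y j \<le> s * u j" if "j < n" for j
    using fmax[OF that] u_pos[of j] unfolding s_def f_def by (simp add: field_simps)
  have ykpos: "y k > 0" using yk spos u_pos[of k] by simp
  have step1: "(\<Sum>j<n. a k j * y j) \<le> (\<Sum>j<n. a k j * (s * u j))"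
    using yle nonneg k by (intro sum_mono mult_left_mono) auto
  have step2: "(\<Sum>j<n. a k j * (s * u j)) = s * (\<Sum>j<n. a k j * u j)"
    by (simp add: sum_distrib_left algebra_simps)
  have step3: "s * (\<Sum>j<n. a k j * u j) \<le> s * (phi * u k)"
    using Au_le[OF k] spos by simp
  have chain: "rho * y k \<le> phi * y k" using sub[OF k] step1 step2 step3 yk
    by (simp add: algebra_simps)
  then show "rho \<le> phi" using ykpos by simp
  assume eq: "rho = phi" and apos: "\<And>k j. k < n \<Longrightarrow> j < n \<Longrightarrow> k \<noteq> j \<Longrightarrow> a k j > 0"
  have "(\<Sum>j<n. a k j * (s * u j)) - (\<Sum>j<n. a k j * y j) = 0"
    using sub[OF k] step1 step2 step3 yk eq by (simp add: algebra_simps)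
  then have "(\<Sum>j<n. a k j * (s * u j - y j)) = 0"
    by (simp add: sum_subtractf[symmetric] algebra_simps)
  then have z: "\<forall>j\<in>{..<n}. a k j * (s * u j - y j) = 0"
    using yle nonneg k by (subst sum_nonneg_eq_0_iff[symmetric]) auto
  have yeq: "y j = s * u j" if j: "j < n" for j
  proof (cases "j = k")
    case True then show ?thesis using yk by simp
  next
    case False
    then have "a k j > 0" using apos k j by simp
    moreover have "a k j * (s * u j - y j) = 0" using z j by blast
    ultimately have "s * u j - y j = 0" by simp
    then show ?thesis by simp
  qed
  show "\<forall>m<n. (\<Sum>j<n. a m j * u j) = phi * u m"
  proof (intro allI impI)
    fix m assume m: "m < n"
    have "(\<Sum>j<n. a m j * y j) = s * (\<Sum>j<n. a m j * u j)"
      using yeq by (simp add: sum_distrib_left algebra_simps)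
    then have "s * (phi * u m) \<le> s * (\<Sum>j<n. a m j * u j)"
      using sub[OF m] eq yeq[OF m] by (simp add: algebra_simps)
    then have "phi * u m \<le> (\<Sum>j<n. a m j * u j)" using spos by simp
    then show "(\<Sum>j<n. a m j * u j) = phi * u m" using Au_le[OF m] by linarith
  qed
qed

end


lemma gdist_self: "k < n \<Longrightarrow> gdist n E k k = 0"
  unfolding gdist_def
  by (rule Least_eq_0, rule exI[of _ "[k]"]) (simp add: is_walk_def)

lemma gdist_pos:
  assumes "connected_graph n E" "k < n" "j < n" "k \<noteq> j"
  shows "gdist n E k j > 0"
proof -
  obtain xs where xs: "is_walk n E xs" "hd xs = k" "last xs = j"
    using assms unfolding connected_graph_def by blast
  then have "xs \<noteq> []" by (simp add: is_walk_def)
  then have ex: "\<exists>m. \<exists>xs. is_walk n E xs \<and> hd xs = k \<and> last xs = j \<and> length xs = Suc m"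
    using xs by (intro exI[of _ "length xs - 1"] exI[of _ xs]) auto
  from LeastI_ex[OF ex] obtain ys where ys: "is_walk n E ys" "hd ys = k" "last ys = j"
    "length ys = Suc (gdist n E k j)" unfolding gdist_def by blast
  show ?thesis
  proof (rule ccontr)
    assume "\<not> ?thesis"
    then have "length ys = 1" using ys by simp
    then obtain x where "ys = [x]" by (cases ys) auto
    then show False using ys assms(4) by simp
  qed
qed

lemma transmission_pos:
  assumes "connected_graph n E" "k < n" "n \<ge> 2"
  shows "transmission n E k > 0"
proof -
  define j :: nat where "j = (if k = 0 then 1 else 0)"
  have j: "j < n" "j \<noteq> k" using assms unfolding j_def by auto
  have "real (gdist n E k j) \<le> (\<Sum>j<n. real (gdist n E k j))"
    using j by (intro member_le_sum) auto
  moreover have "gdist n E k j > 0" using gdist_pos[OF assms(1,2) j(1)] j by simp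
  ultimately show ?thesis unfolding transmission_def by simp
qed

lemma dist_matrix_carrier: "dist_matrix n E \<in> carrier_mat n n"
  unfolding dist_matrix_def by simp

lemma dist_mult_index:
  assumes "k < n" "dim_vec v = n"
  shows "(dist_matrix n E *\<^sub>v v) $ k = (\<Sum>j<n. of_nat (gdist n E k j) * v $ j)"
  using assms unfolding dist_matrix_def
  by (simp add: scalar_prod_def row_def lessThan_atLeast0)


theorem corollary7:
  fixes n :: nat and E :: "nat \<Rightarrow> nat \<Rightarrow> bool" and i :: nat and N :: real
  assumes "simple_graph n E" and "connected_graph n E" and "n \<ge> 2"
    and sorted: "\<And>a b. a \<le> b \<Longrightarrow> b < n \<Longrightarrow> avg_transmission n E b \<le> avg_transmission n E a"
    and N_def: "N = Max {real (gdist n E k l) * transmission n E l / transmission n E k | k l. k < n \<and> l < n}"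
    and "i < n"
  shows "(spectral_radius (dist_matrix n E)
           \<le> (avg_transmission n E i - N
               + sqrt ((avg_transmission n E i + N)\<^sup>2
                       + 4 * N * (\<Sum>k<i. avg_transmission n E k - avg_transmission n E i))) / 2) \<and>
         (spectral_radius (dist_matrix n E)
           = (avg_transmission n E i - N
               + sqrt ((avg_transmission n E i + N)\<^sup>2
                       + 4 * N * (\<Sum>k<i. avg_transmission n E k - avg_transmission n E i))) / 2
         \<longleftrightarrow> (\<forall>k<n. avg_transmission n E k = avg_transmission n E 0) \<or>
             (\<exists>t. 1 \<le> t \<and> t \<le> i \<and>
                (\<forall>k<n. \<forall>l<t. k \<noteq> l \<longrightarrow>
                    real (gdist n E k l) * transmission n E l / transmission n E k = N) \<and>
                (\<forall>k. t \<le> k \<and> k < n \<longrightarrow> avg_transmission n E k = avg_transmission n E t)))"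
  proof -
  let ?T = "transmission n E" and ?M = "avg_transmission n E"
  define a where "a k j = real (gdist n E k j) * ?T j / ?T k" for k j
  have Tpos: "k < n \<Longrightarrow> ?T k > 0" for k using transmission_pos assms(2,3) by blast
  have fin: "finite {real (gdist n E k l) * transmission n E l / transmission n E k | k l. k < n \<and> l < n}"
  proof -
    have "{real (gdist n E k l) * transmission n E l / transmission n E k | k l. k < n \<and> l < n}
      = (\<lambda>(k, l). real (gdist n E k l) * transmission n E l / transmission n E k) ` ({..<n} \<times> {..<n})"
      by auto
    then show ?thesis by simp
  qed
  have aleN: "a k j \<le> N" if "k < n" "j < n" for k j
    unfolding N_def a_def using that by (intro Max_ge[OF fin]) auto
  have apos: "a k j > 0" if "k < n" "j < n" "k \<noteq> j" for k j
    unfolding a_def using that Tpos gdist_pos[OF assms(2)] by simp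
  have adiag: "a k k = 0" if "k < n" for k unfolding a_def using gdist_self[OF that] by simp
  have anonneg: "a k j \<ge> 0" if "k < n" "j < n" for k j
    unfolding a_def using that Tpos[of k] Tpos[of j] by simp
  have rdef: "?M k = (\<Sum>j<n. a k j)" if "k < n" for k
    unfolding avg_transmission_def a_def by (simp add: sum_divide_distrib)
  have Npos: "N > 0" using apos[of 0 1] aleN[of 0 1] assms(3) by simp
  interpret B: bnd n i a N ?M
    using adiag anonneg aleN rdef sorted \<open>i < n\<close> Npos by unfold_locales auto
  have phi: "B.phi = (avg_transmission n E i - N
               + sqrt ((avg_transmission n E i + N)\<^sup>2
                       + 4 * N * (\<Sum>k<i. avg_transmission n E k - avg_transmission n E i))) / 2"
    unfolding B.phi_def B.S_def ..
  have n0: "n > 0" using assms(3) by simp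
  note Dc = dist_matrix_carrier[of n E]
  have subev: "\<exists>y k0. (\<forall>j<n. y j \<ge> 0) \<and> k0 < n \<and> y k0 > 0 \<and>
      (\<forall>k<n. cmod lam * y k \<le> (\<Sum>j<n. a k j * y j))" if ev: "eigenvalue (dist_matrix n E) lam" for lam
  proof -
    obtain v where v: "eigenvector (dist_matrix n E) v lam" using ev unfolding eigenvalue_def by blast
    have dimr: "dim_row (dist_matrix n E) = n" using Dc by simp
    have vc: "v \<in> carrier_vec n" and vnz: "v \<noteq> 0\<^sub>v n" and Av: "dist_matrix n E *\<^sub>v v = lam \<cdot>\<^sub>v v"
      using v unfolding eigenvector_def dimr by auto
    have dv: "dim_vec v = n" using vc by simp
    obtain k0 where k0: "k0 < n" "v $ k0 \<noteq> 0"
      using vnz dv by (metis eq_vecI index_zero_vec(1) index_zero_vec(2))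
    define y where "y j = cmod (v $ j) / ?T j" for j
    have "\<forall>k<n. cmod lam * y k \<le> (\<Sum>j<n. a k j * y j)"
    proof (intro allI impI)
      fix k assume k: "k < n"
      have "lam * v $ k = (\<Sum>j<n. of_nat (gdist n E k j) * v $ j)"
        using arg_cong[OF Av, of "\<lambda>w. w $ k"] dist_mult_index[OF k dv] k dv by simp
      then have "cmod lam * cmod (v $ k) = cmod (\<Sum>j<n. of_nat (gdist n E k j) * v $ j)"
        by (metis norm_mult)
      also have "\<dots> \<le> (\<Sum>j<n. cmod (of_nat (gdist n E k j) * v $ j))" by (rule norm_sum)
      also have "\<dots> = (\<Sum>j<n. real (gdist n E k j) * cmod (v $ j))"
        by (simp add: norm_mult)
      finally have "cmod lam * cmod (v $ k) \<le> (\<Sum>j<n. real (gdist n E k j) * cmod (v $ j))" .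
      then have "cmod lam * cmod (v $ k) / ?T k \<le> (\<Sum>j<n. real (gdist n E k j) * cmod (v $ j)) / ?T k"
        using Tpos[OF k] by (simp add: divide_right_mono)
      also have "\<dots> = (\<Sum>j<n. a k j * y j)"
        unfolding sum_divide_distrib a_def y_def
      proof (rule sum.cong[OF refl])
        fix j assume "j \<in> {..<n}"
        then have "?T j > 0" using Tpos by simp
        then show "real (gdist n E k j) * cmod (v $ j) / ?T k =
            real (gdist n E k j) * ?T j / ?T k * (cmod (v $ j) / ?T j)" by (simp add: field_simps)
      qed
      finally show "cmod lam * y k \<le> (\<Sum>j<n. a k j * y j)" unfolding y_def by simp
    qed
    moreover have "\<forall>j<n. y j \<ge> 0" unfolding y_def using Tpos by (simp add: less_imp_le)
    moreover have "y k0 > 0" unfolding y_def using Tpos[OF k0(1)] k0 by simp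
    ultimately show ?thesis using k0 by blast
  qed
  obtain lam where lam: "lam \<in> spectrum (dist_matrix n E)" "spectral_radius (dist_matrix n E) = cmod lam"
    using spectral_radius_mem_max(1)[OF Dc n0] by auto
  obtain y k0 where y: "\<forall>j<n. y j \<ge> 0" "k0 < n" "y k0 > 0"
     "\<forall>k<n. cmod lam * y k \<le> (\<Sum>j<n. a k j * y j)"
    using subev lam(1) unfolding spectrum_def by blast
  have le: "spectral_radius (dist_matrix n E) \<le> B.phi"
    using B.sub_eig(1)[of y k0 "cmod lam"] y lam(2) by simp
  have eq_imp: "spectral_radius (dist_matrix n E) = B.phi \<Longrightarrow>
      \<forall>m<n. (\<Sum>j<n. a m j * B.u j) = B.phi * B.u m"
    using B.sub_eig(2)[of y k0 "cmod lam"] y lam(2) apos by simp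
  have imp_eq: "spectral_radius (dist_matrix n E) = B.phi"
    if H: "\<forall>m<n. (\<Sum>j<n. a m j * B.u j) = B.phi * B.u m"
  proof -
    define w where "w = vec n (\<lambda>k. complex_of_real (?T k * B.u k))"
    have wc: "w \<in> carrier_vec n" unfolding w_def by simp
    have wnz: "w \<noteq> 0\<^sub>v n"
    proof
      assume "w = 0\<^sub>v n"
      then have "w $ 0 = 0" using n0 by simp
      then show False unfolding w_def using n0 Tpos[OF n0] B.u_pos[of 0] by simp
    qed
    have "dist_matrix n E *\<^sub>v w = complex_of_real B.phi \<cdot>\<^sub>v w"
    proof (rule eq_vecI)
      show "dim_vec (dist_matrix n E *\<^sub>v w) = dim_vec (complex_of_real B.phi \<cdot>\<^sub>v w)"
        using Dc wc by simp
      fix k assume "k < dim_vec (complex_of_real B.phi \<cdot>\<^sub>v w)"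
      then have k: "k < n" using wc by simp
      have "(\<Sum>j<n. real (gdist n E k j) * (?T j * B.u j))
          = ?T k * (\<Sum>j<n. a k j * B.u j)"
        unfolding a_def sum_distrib_left
      proof (rule sum.cong[OF refl])
        fix j assume "j \<in> {..<n}"
        then have "?T j > 0" using Tpos by simp
        then show "real (gdist n E k j) * (?T j * B.u j) =
            ?T k * (real (gdist n E k j) * ?T j / ?T k * B.u j)" using Tpos[OF k] by (simp add: field_simps)
      qed
      also have "\<dots> = B.phi * (?T k * B.u k)" using H k by simp
      finally have e: "(\<Sum>j<n. real (gdist n E k j) * (?T j * B.u j)) = B.phi * (?T k * B.u k)" .
      have "(dist_matrix n E *\<^sub>v w) $ k = (\<Sum>j<n. of_nat (gdist n E k j) * w $ j)"
        using dist_mult_index[OF k] wc by simp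
      also have "\<dots> = complex_of_real (\<Sum>j<n. real (gdist n E k j) * (?T j * B.u j))"
        unfolding w_def by (simp add: of_real_sum)
      also have "\<dots> = (complex_of_real B.phi \<cdot>\<^sub>v w) $ k"
        using e k unfolding w_def by simp
      finally show "(dist_matrix n E *\<^sub>v w) $ k = (complex_of_real B.phi \<cdot>\<^sub>v w) $ k" .
    qed
    then have "eigenvector (dist_matrix n E) w (complex_of_real B.phi)"
      unfolding eigenvector_def using wc wnz Dc by simp
    then have "complex_of_real B.phi \<in> spectrum (dist_matrix n E)"
      unfolding spectrum_def eigenvalue_def by blast
    then have "cmod (complex_of_real B.phi) \<le> spectral_radius (dist_matrix n E)"
      using spectral_radius_mem_max(2)[OF Dc n0] by blast
    moreover have "B.phi \<ge> 0" using B.phi_ge B.rl_nonneg by linarith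
    ultimately show ?thesis using le by simp
  qed
  have iff: "spectral_radius (dist_matrix n E) = B.phi \<longleftrightarrow>
     ((\<forall>k<n. ?M k = ?M 0) \<or>
      (\<exists>t. 1 \<le> t \<and> t \<le> i \<and> (\<forall>k<n. \<forall>j<t. k \<noteq> j \<longrightarrow> a k j = N) \<and>
        (\<forall>k. t \<le> k \<and> k < n \<longrightarrow> ?M k = ?M t)))"
    using eq_imp imp_eq B.Au_eq_iff B.cond_iff by blast
  show ?thesis using le iff unfolding phi[symmetric] a_def by simp
qed

end
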